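(* Let $n\ge 5$. If there exists a listing $\pi_0,\ldots,\pi_{n!-1}$ of all permutations of $\{1,\ldots,n\}$ (written as words) such that consecutive permutations differ by interchanging the symbols in two adjacent positions and $\pi_{i+n!/2}$ is the reversal of $\pi_i$ for all $0\le i<n!/2$, then $n\equiv 0$ or $1 \pmod 4$.
   Context: The reversal of a word $a_1a_2\cdots a_n$ is $a_na_{n-1}\cdots a_1$. *)

theory Defs
  imports Main
begin

definition perm_words :: "nat \<Rightarrow> nat list set" where
  "perm_words n = {xs. length xs = n \<and> distinct xs \<and> set xs = {1..n}}"

definition adj_transp :: "nat list \<Rightarrow> nat list \<Rightarrow> bool" where
  "adj_transp xs ys \<longleftrightarrow>
     (\<exists>j. Suc j < length xs \<and> ys = xs[j := xs ! Suc j, Suc j := xs ! j])"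

end

theory Submission
  imports Defs
begin

fun ninv :: "nat list \<Rightarrow> nat" where
  "ninv [] = 0"
| "ninv (x # xs) = length (filter (\<lambda>y. y < x) xs) + ninv xs"

lemma ninv_append:
  "ninv (xs @ ys) = ninv xs + ninv ys + (\<Sum>x\<leftarrow>xs. length (filter (\<lambda>y. y < x) ys))"
  by (induction xs) auto

lemma ninv_snoc: "ninv (ys @ [x]) = ninv ys + length (filter (\<lambda>y. x < y) ys)"
proof -
  have "(\<Sum>y\<leftarrow>ys. length (filter (\<lambda>z. z < y) [x])) = length (filter (\<lambda>y. x < y) ys)"
    by (induction ys) auto
  then show ?thesis by (simp add: ninv_append)
qed

lemma ninv_rev:
  "distinct xs \<Longrightarrow> 2 * (ninv xs + ninv (rev xs)) = length xs * (length xs - 1)"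
proof (induction xs)
  case Nil
  then show ?case by simp
next
  case (Cons x xs)
  have "filter (\<lambda>y. x < y) xs = filter (\<lambda>y. \<not> y < x) xs"
    using Cons.prems by (intro filter_cong) (auto, metis linorder_neqE_nat)
  then have e: "length (filter (\<lambda>y. y < x) xs) + length (filter (\<lambda>y. x < y) xs) = length xs"
    by (simp add: sum_length_filter_compl)
  have ih: "2 * (ninv xs + ninv (rev xs)) = length xs * (length xs - 1)"
    using Cons by simp
  have "2 * (ninv (x # xs) + ninv (rev (x # xs))) =
        2 * (ninv xs + ninv (rev xs)) + 2 * length xs"
    using e by (simp add: ninv_snoc rev_filter[symmetric])
  also have "\<dots> = length xs * (length xs - 1) + 2 * length xs" using ih by simp
  also have "\<dots> = length (x # xs) * (length (x # xs) - 1)"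
    by (cases "length xs") (auto simp: algebra_simps)
  finally show ?case .
qed

lemma hlp: "(P::nat) = A + X + S \<Longrightarrow> Q = A + Y + S' \<Longrightarrow> S = S' \<Longrightarrow> P + Q = X + Y + 2 * (A + S)"
  by simp

lemma ninv_swap2:
  "a \<noteq> b \<Longrightarrow> odd (ninv (as @ [a, b] @ bs) + ninv (as @ [b, a] @ bs))"
proof -
  assume ab: "a \<noteq> b"
  have c: "(\<Sum>x\<leftarrow>as. length (filter (\<lambda>y. y < x) ([a, b] @ bs))) =
           (\<Sum>x\<leftarrow>as. length (filter (\<lambda>y. y < x) ([b, a] @ bs)))"
    by (induction as) auto
  have o1: "odd (ninv ([a, b] @ bs) + ninv ([b, a] @ bs))"
    using ab by (cases "a < b") auto
  moreover have e1: "ninv (as @ [a, b] @ bs) = ninv as + ninv ([a, b] @ bs) +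
      (\<Sum>x\<leftarrow>as. length (filter (\<lambda>y. y < x) ([a, b] @ bs)))"
    by (rule ninv_append)
  moreover have e2: "ninv (as @ [b, a] @ bs) = ninv as + ninv ([b, a] @ bs) +
      (\<Sum>x\<leftarrow>as. length (filter (\<lambda>y. y < x) ([b, a] @ bs)))"
    by (rule ninv_append)
  have eq: "ninv (as @ [a, b] @ bs) + ninv (as @ [b, a] @ bs) =
     (ninv ([a, b] @ bs) + ninv ([b, a] @ bs)) + 2 * (ninv as +
      (\<Sum>x\<leftarrow>as. length (filter (\<lambda>y. y < x) ([a, b] @ bs))))"
    by (rule hlp[OF e1 e2 c])
  have g: "odd (x::nat) \<Longrightarrow> odd (x + 2 * y)" for x y by simp
  show ?thesis unfolding eq by (rule g) (rule o1)
qed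

lemma adj_transp_parity:
  assumes "distinct xs" "adj_transp xs ys"
  shows "odd (ninv xs + ninv ys)"
proof -
  obtain j where j: "Suc j < length xs" and ys: "ys = xs[j := xs ! Suc j, Suc j := xs ! j]"
    using assms(2) unfolding adj_transp_def by blast
  define as where "as = take j xs"
  define bs where "bs = drop (Suc (Suc j)) xs"
  have xs: "xs = as @ [xs ! j, xs ! Suc j] @ bs"
    unfolding as_def bs_def using j
    by (simp add: Cons_nth_drop_Suc)
  have la: "length as = j" unfolding as_def using j by simp
  have ys': "ys = as @ [xs ! Suc j, xs ! j] @ bs"
  proof -
    have "ys = (as @ [xs ! j, xs ! Suc j] @ bs)[j := xs ! Suc j, Suc j := xs ! j]"
      using ys xs by metis
    then show ?thesis using la by (simp add: list_update_append)
  qed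
  have "xs ! j \<noteq> xs ! Suc j"
    using assms(1) j by (simp add: nth_eq_iff_index_eq)
  then show ?thesis using ninv_swap2 xs ys' by metis
qed

theorem proposition2:
  fixes n :: nat and L :: "nat \<Rightarrow> nat list"
  assumes "n \<ge> 5"
    and "bij_betw L {..<fact n} (perm_words n)"
    and "\<forall>i. Suc i < fact n \<longrightarrow> adj_transp (L i) (L (Suc i))"
    and "\<forall>i. i < fact n div 2 \<longrightarrow> L (i + fact n div 2) = rev (L i)"
  shows "n mod 4 = 0 \<or> n mod 4 = 1"
proof -
  define N :: nat where "N = fact n"
  define h where "h = N div 2"
  have mem: "k < N \<Longrightarrow> distinct (L k) \<and> length (L k) = n" for k
    using bij_betw_apply[OF assms(2), of k] unfolding N_def perm_words_def by auto
  have par: "k < N \<Longrightarrow> (even (ninv (L k)) = (even (ninv (L 0)) = even k))" for k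
  proof (induction k)
    case 0
    then show ?case by simp
  next
    case (Suc k)
    have "odd (ninv (L k) + ninv (L (Suc k)))"
      using adj_transp_parity[of "L k" "L (Suc k)"] mem[of k] Suc.prems assms(3)
      unfolding N_def by auto
    then show ?case using Suc by auto
  qed
  have "fact 4 dvd (fact n :: nat)" using assms(1) by (intro fact_dvd) simp
  then have "4 dvd N" unfolding N_def by (metis dvd_trans fact_numeral dvd_def) 
  moreover have "N > 0" unfolding N_def by simp
  ultimately have hev: "even h" and hpos: "0 < h" and hN: "h < N"
    unfolding h_def by (auto elim!: dvdE)
  have "L h = rev (L 0)" using assms(4) hpos unfolding h_def N_def
    by (metis add_0)
  then have "even (ninv (L 0) + ninv (rev (L 0)))" using par[OF hN] hev by auto
  moreover have "2 * (ninv (L 0) + ninv (rev (L 0))) = n * (n - 1)"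
    using ninv_rev mem[of 0] hN by auto
  moreover obtain k where k: "ninv (L 0) + ninv (rev (L 0)) = 2 * k"
    using calculation(1) by (rule evenE)
  ultimately have m: "4 * k = n * (n - 1)" by simp
  show ?thesis
  proof (rule ccontr)
    assume nc: "\<not> ?thesis"
    define q where "q = n div 4"
    have "n mod 4 = 2 \<or> n mod 4 = 3" using nc by auto
    then show False
    proof
      assume "n mod 4 = 2"
      then have nq: "n = 4 * q + 2" unfolding q_def by presburger
      have "n * (n - 1) = 4 * (4 * q * q + 3 * q) + 2" unfolding nq by (simp add: algebra_simps)
      then show False using m by presburger
    next
      assume "n mod 4 = 3"
      then have nq: "n = 4 * q + 3" unfolding q_def by presburger
      have "n * (n - 1) = 4 * (4 * q * q + 5 * q + 1) + 2" unfolding nq by (simp add: algebra_simps)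
      then show False using m by presburger
    qed
  qed
qed

end
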